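(* Let $D$ be a reduced knot diagram, let $2\le k\le\infty$, and let $\boldsymbol\ell$ be a null pattern of the game matrix $M$ of some version of the $k$-color region select game on $D$. Then there exists $s\in\mathbb{Z}_k$ such that $\sigma_{\boldsymbol\ell}(e)\in\{s,-s\}$ for every edge $e$ of $D$. Moreover, let $e_1,e_2$ be any two edges that meet at a common vertex and are not incident to a common region. Then $\sigma_{\boldsymbol\ell}(e_1)=s$ if and only if $\sigma_{\boldsymbol\ell}(e_2)=-s$.
   Context: Diagrams: a link (knot) diagram $D$ is the underlying graph of a regular projection of a link (knot) into $S^2$. Its vertices are the crossings, each of valence 4, and over/under information is ignored. Components without crossings are closed loops, each regarded as one edge with no vertices. Regions of $D$ are the connected components of $S^2\setminus D$. A vertex or edge is incident to a region if it lies in the boundary of that region. Two regions are adjacent if they are incident to a common edge. A vertex $v$ is reducible if some circle in $S^2$ meets $D$ transversely only at $v$, and irreducible otherwise. An irreducible vertex is incident to four distinct regions. A reducible vertex $v$ is incident to exactly three regions $r_0,r_1,r_2$, where $r_0$ touches $v$ from two sides and $r_1,r_2$ touch it from one side. A knot diagram with $n$ vertices has $n+2$ regions. A knot diagram is reduced if all its vertices are irreducible. Ring: for an integer $k\ge2$ let $\mathbb{Z}_k=\mathbb{Z}/k\mathbb{Z}$, and for $k=\infty$ let $\mathbb{Z}_\infty=\mathbb{Z}$. Game versions: a version of the $k$-color region select game on $D$ is a choice of an increment number $a(v,r)\in\mathbb{Z}_k$ for every incident vertex–region pair, subject to the following rules. - If $k<\infty$ and $v$ is irreducible, then $a(v,r)=a_v$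 is the same for all regions $r$ incident to $v$, and $a_v$ is not a zero divisor of $\mathbb{Z}_k$. - If $k<\infty$ and $v$ is reducible, then $a(v,r_0)$ is arbitrary, while $a(v,r_1)$ and $a(v,r_2)$ are not zero divisors. - If $k=\infty$, then $a(v,r)=1$, except that $a(v,r_0)\in\mathbb{Z}$ is arbitrary when $v$ is reducible. - The original game is the version in which all increment numbers equal $1$. Game matrix: enumerate the vertices as $v_1,\dots,v_n$ and the regions as $r_1,\dots,r_m$. The game matrix is the $n\times m$ matrix $M$ over $\mathbb{Z}_k$ with $M_{ij}=a(v_i,r_j)$ if $v_i$ is incident to $r_j$, and $M_{ij}=0$ otherwise. Patterns and configurations: a push pattern is a vector $\mathbf p\in\mathbb{Z}_k^m$, and $\mathbf p(r_j)=p_j$ is the number of times $r_j$ is pushed. A region $r$ is not pushed in $\mathbf p$ if $\mathbf p(r)=0$. A color configuration is a vector $\mathbf c\in\mathbb{Z}_k^n$. Applying $\mathbf p$ to $\mathbf c$ yields $\mathbf c+M\mathbf p$. The configuration $\mathbf c$ is solvable if some $\mathbf p$ satisfies $M\mathbf p=-\mathbf c$; such a $\mathbf p$ is a solving pattern for $\mathbf c$. $D$ is always solvable in the version if every $\mathbf c\in\mathbb{Z}_k^n$ is solvable. A null pattern is an element of $Ker_k(M)=\{\mathbf p\in\mathbb{Z}_k^m: M\mathbf p=0\}$. Push number: for a push pattern $\mathbf p$ and an edge $e$ incident to regions $r,r'$, the push number of $e$ is $\sigma_{\mathbf p}(e)=\mathbf p(r)+\mathbf p(r')\in\mathbb{Z}_k$.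 *)

theory Defs
  imports "HOL-Combinatorics.Permutations" "HOL-Combinatorics.Orbits"
          "HOL-Number_Theory.Cong" "HOL-Library.Extended_Nat"
begin

(* ---------------------------------------------------------------------
   Knot diagrams with at least one crossing, as combinatorial maps
   (rotation systems) on a finite set H of darts (half-edges):
     alpha : fixed-point-free involution pairing the two darts of an edge,
     sigma : counter-clockwise rotation of the darts around their crossing
             (every crossing has valence 4).
   Vertices = sigma-orbits, edges = alpha-orbits {h, alpha h},
   regions  = orbits of (alpha o sigma); dart h stands for the corner of its
   vertex lying between h and sigma h, and that corner belongs to the region
   orbit (alpha o sigma) h.
   Planarity (embedding in S^2) = connectedness + Euler's formula V - E + F = 2.
   Passing straight through a crossing = going to the opposite dart sigma^2;
   the orbits of sigma^2 o alpha are the oriented traversals of the link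
   components, so a knot (one component) has exactly 2 such orbits.
   --------------------------------------------------------------------- *)

definition vertices :: "'d set \<Rightarrow> ('d \<Rightarrow> 'd) \<Rightarrow> 'd set set" where
  "vertices H \<sigma> = (\<lambda>h. orbit \<sigma> h) ` H"

definition edges :: "'d set \<Rightarrow> ('d \<Rightarrow> 'd) \<Rightarrow> 'd set set" where
  "edges H \<alpha> = (\<lambda>h. {h, \<alpha> h}) ` H"

definition face :: "('d \<Rightarrow> 'd) \<Rightarrow> ('d \<Rightarrow> 'd) \<Rightarrow> 'd \<Rightarrow> 'd set" where
  "face \<alpha> \<sigma> h = orbit (\<alpha> \<circ> \<sigma>) h"

definition regions :: "'d set \<Rightarrow> ('d \<Rightarrow> 'd) \<Rightarrow> ('d \<Rightarrow> 'd) \<Rightarrow> 'd set set" where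
  "regions H \<alpha> \<sigma> = face \<alpha> \<sigma> ` H"

definition strands :: "'d set \<Rightarrow> ('d \<Rightarrow> 'd) \<Rightarrow> ('d \<Rightarrow> 'd) \<Rightarrow> 'd set set" where
  "strands H \<alpha> \<sigma> = (\<lambda>h. orbit (\<sigma> \<circ> \<sigma> \<circ> \<alpha>) h) ` H"

definition knot_diagram :: "'d set \<Rightarrow> ('d \<Rightarrow> 'd) \<Rightarrow> ('d \<Rightarrow> 'd) \<Rightarrow> bool" where
  "knot_diagram H \<alpha> \<sigma> \<longleftrightarrow>
     finite H \<and> H \<noteq> {} \<and> \<alpha> permutes H \<and> \<sigma> permutes H \<and>
     (\<forall>h\<in>H. \<alpha> (\<alpha> h) = h \<and> \<alpha> h \<noteq> h \<and> (\<sigma> ^^ 4) h = h \<and> (\<sigma> ^^ 2) h \<noteq> h) \<and>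
     (\<forall>h\<in>H. \<forall>h'\<in>H. (h, h') \<in> {(x, y). y = \<alpha> x \<or> y = \<sigma> x}\<^sup>*) \<and>
     int (card (vertices H \<sigma>)) - int (card (edges H \<alpha>)) + int (card (regions H \<alpha> \<sigma>)) = 2 \<and>
     card (strands H \<alpha> \<sigma>) = 2"

definition vr_incident :: "'d set \<Rightarrow> 'd set \<Rightarrow> bool" where
  "vr_incident v r \<longleftrightarrow> v \<inter> r \<noteq> {}"

definition vertex_regions :: "'d set \<Rightarrow> ('d \<Rightarrow> 'd) \<Rightarrow> ('d \<Rightarrow> 'd) \<Rightarrow> 'd set \<Rightarrow> 'd set set" where
  "vertex_regions H \<alpha> \<sigma> v = {r \<in> regions H \<alpha> \<sigma>. vr_incident v r}"

definition irreducible_vertex :: "('d \<Rightarrow> 'd) \<Rightarrow> ('d \<Rightarrow> 'd) \<Rightarrow> 'd set \<Rightarrow> bool" where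
  "irreducible_vertex \<alpha> \<sigma> v \<longleftrightarrow> card (face \<alpha> \<sigma> ` v) = 4"

definition reduced :: "'d set \<Rightarrow> ('d \<Rightarrow> 'd) \<Rightarrow> ('d \<Rightarrow> 'd) \<Rightarrow> bool" where
  "reduced H \<alpha> \<sigma> \<longleftrightarrow> (\<forall>v\<in>vertices H \<sigma>. irreducible_vertex \<alpha> \<sigma> v)"

(* the two regions on the two sides of the edge containing dart g are
   face g and face (sigma^-1 g); this is independent of the dart chosen *)
definition edge_regions :: "('d \<Rightarrow> 'd) \<Rightarrow> ('d \<Rightarrow> 'd) \<Rightarrow> 'd set \<Rightarrow> 'd set set" where
  "edge_regions \<alpha> \<sigma> e = face \<alpha> \<sigma> ` e \<union> (\<lambda>g. face \<alpha> \<sigma> (inv \<sigma> g)) ` e"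

(* ---------------- the ring Z_k, k in {2,3,...} \<union> {\<infinity>} ----------------
   Elements of Z_k are represented by integers, equality in Z_k is
   congruence modulo zk k, where zk \<infinity> = 0 (congruence mod 0 is equality). *)
definition zk :: "enat \<Rightarrow> int" where
  "zk k = (case k of enat n \<Rightarrow> int n | \<infinity> \<Rightarrow> 0)"

definition non_zero_divisor :: "int \<Rightarrow> int \<Rightarrow> bool" where
  "non_zero_divisor m a \<longleftrightarrow> (\<forall>b. [a * b = 0] (mod m) \<longrightarrow> [b = 0] (mod m))"

definition corner_count :: "('d \<Rightarrow> 'd) \<Rightarrow> ('d \<Rightarrow> 'd) \<Rightarrow> 'd set \<Rightarrow> 'd set \<Rightarrow> nat" where
  "corner_count \<alpha> \<sigma> v r = card {h \<in> v. face \<alpha> \<sigma> h = r}"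

definition game_version :: "'d set \<Rightarrow> ('d \<Rightarrow> 'd) \<Rightarrow> ('d \<Rightarrow> 'd) \<Rightarrow> enat \<Rightarrow>
    ('d set \<Rightarrow> 'd set \<Rightarrow> int) \<Rightarrow> bool" where
  "game_version H \<alpha> \<sigma> k a \<longleftrightarrow>
     (\<forall>v\<in>vertices H \<sigma>.
        (k \<noteq> \<infinity> \<and> irreducible_vertex \<alpha> \<sigma> v \<longrightarrow>
           (\<forall>r\<in>vertex_regions H \<alpha> \<sigma> v. \<forall>r'\<in>vertex_regions H \<alpha> \<sigma> v.
              [a v r = a v r'] (mod zk k))) \<and>
        (\<forall>r\<in>vertex_regions H \<alpha> \<sigma> v.
           irreducible_vertex \<alpha> \<sigma> v \<or> corner_count \<alpha> \<sigma> v r = 1 \<longrightarrow>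
             (if k = \<infinity> then [a v r = 1] (mod zk k) else non_zero_divisor (zk k) (a v r))))"

definition game_apply :: "'d set \<Rightarrow> ('d \<Rightarrow> 'd) \<Rightarrow> ('d \<Rightarrow> 'd) \<Rightarrow>
    ('d set \<Rightarrow> 'd set \<Rightarrow> int) \<Rightarrow> ('d set \<Rightarrow> int) \<Rightarrow> 'd set \<Rightarrow> int" where
  "game_apply H \<alpha> \<sigma> a l v = (\<Sum>r\<in>vertex_regions H \<alpha> \<sigma> v. a v r * l r)"

definition null_pattern :: "'d set \<Rightarrow> ('d \<Rightarrow> 'd) \<Rightarrow> ('d \<Rightarrow> 'd) \<Rightarrow> enat \<Rightarrow>
    ('d set \<Rightarrow> 'd set \<Rightarrow> int) \<Rightarrow> ('d set \<Rightarrow> int) \<Rightarrow> bool" where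
  "null_pattern H \<alpha> \<sigma> k a l \<longleftrightarrow>
     (\<forall>v\<in>vertices H \<sigma>. [game_apply H \<alpha> \<sigma> a l v = 0] (mod zk k))"

definition push_number :: "('d \<Rightarrow> 'd) \<Rightarrow> ('d \<Rightarrow> 'd) \<Rightarrow> ('d set \<Rightarrow> int) \<Rightarrow> 'd set \<Rightarrow> int" where
  "push_number \<alpha> \<sigma> l e =
     (let g = (SOME g. g \<in> e) in l (face \<alpha> \<sigma> g) + l (face \<alpha> \<sigma> (inv \<sigma> g)))"

end

theory Submission
  imports Defs
begin

lemma perm_orbit_eq:
  assumes "permutation f" "y \<in> orbit f x"
  shows "orbit f y = orbit f x"
  using assms cyclic_on_orbit' orbit_cyclic_eq3 by metis

lemma card4_distinct:
  assumes "card {a,b,c,d} = (4::nat)"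
  shows "a \<noteq> b \<and> a \<noteq> c \<and> a \<noteq> d \<and> b \<noteq> c \<and> b \<noteq> d \<and> c \<noteq> d"
proof -
  have "card {a,b,c,d} \<le> 4 - (if a = b \<or> a = c \<or> a = d \<or> b = c \<or> b = d \<or> c = d then 1 else 0)"
    by (auto simp: card_insert_if insert_commute)
  thus ?thesis using assms by (auto split: if_splits)
qed

lemma orbit4:
  assumes "(f ^^ 4) x = x"
  shows "orbit f x = {x, f x, f (f x), f (f (f x))}"
proof -
  have e: "{..<4::nat} = {0,1,2,3}" by auto
  have "orbit f x = {(f ^^ m) x| m. m < 4}" using orbit_altdef_bounded[OF assms] by simp
  also have "\<dots> = (\<lambda>m. (f ^^ m) x) ` {..<4}" by blast
  also have "\<dots> = (\<lambda>m. (f ^^ m) x) ` {0,1,2,3}" by (simp only: e)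
  also have "\<dots> = {x, f x, f (f x), f (f (f x))}"
    by (simp add: numeral_eq_Suc)
  finally show ?thesis .
qed

lemma card2_eq:
  assumes "finite S" "card S = 2" "a \<in> S" "b \<in> S" "a \<noteq> b"
  shows "S = {a, b}"
proof -
  have "{a,b} \<subseteq> S" using assms by auto
  moreover have "card {a,b} = card S" using assms by simp
  ultimately show ?thesis using assms(1) by (metis card_subset_eq)
qed

theorem mainTheorem4:
  fixes H :: "'d set" and \<alpha> \<sigma> :: "'d \<Rightarrow> 'd" and k :: enat
    and a :: "'d set \<Rightarrow> 'd set \<Rightarrow> int" and l :: "'d set \<Rightarrow> int"
  assumes "knot_diagram H \<alpha> \<sigma>"
    and "reduced H \<alpha> \<sigma>"
    and "2 \<le> k"
    and "game_version H \<alpha> \<sigma> k a"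
    and "null_pattern H \<alpha> \<sigma> k a l"
  shows "\<exists>s::int.
    (\<forall>e\<in>edges H \<alpha>. [push_number \<alpha> \<sigma> l e = s] (mod zk k) \<or> [push_number \<alpha> \<sigma> l e = - s] (mod zk k)) \<and>
    (\<forall>e1\<in>edges H \<alpha>. \<forall>e2\<in>edges H \<alpha>.
       (\<exists>v\<in>vertices H \<sigma>. v \<inter> e1 \<noteq> {} \<and> v \<inter> e2 \<noteq> {}) \<and>
       edge_regions \<alpha> \<sigma> e1 \<inter> edge_regions \<alpha> \<sigma> e2 = {} \<longrightarrow>
       ([push_number \<alpha> \<sigma> l e1 = s] (mod zk k) \<longleftrightarrow> [push_number \<alpha> \<sigma> l e2 = - s] (mod zk k)))"
proof -
  define m where "m = zk k"
  note kd = assms(1)[unfolded knot_diagram_def]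
  have fin: "finite H" and aH: "\<alpha> permutes H" and sH: "\<sigma> permutes H" using kd by auto
  have hp: "\<And>h. h \<in> H \<Longrightarrow> \<alpha> (\<alpha> h) = h \<and> \<alpha> h \<noteq> h \<and> (\<sigma> ^^ 4) h = h \<and> \<sigma> (\<sigma> h) \<noteq> h"
    using kd by (auto simp: numeral_eq_Suc)
  have s4: "\<And>h. h \<in> H \<Longrightarrow> \<sigma> (\<sigma> (\<sigma> (\<sigma> h))) = h"
    using hp by (simp add: numeral_eq_Suc)
  have aIn: "\<And>h. h\<in>H \<Longrightarrow> \<alpha> h \<in> H" using aH by (simp add: permutes_in_image)
  have sIn: "\<And>h. h\<in>H \<Longrightarrow> \<sigma> h \<in> H" using sH by (simp add: permutes_in_image)
  have sinv2: "\<And>h. inv \<sigma> (\<sigma> h) = h" using permutes_inverses(2)[OF sH] .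
  have sinv1: "\<And>h. \<sigma> (inv \<sigma> h) = h" using permutes_inverses(1)[OF sH] .
  have sinv: "\<And>h. h\<in>H \<Longrightarrow> inv \<sigma> h = \<sigma> (\<sigma> (\<sigma> h))"
    by (metis s4 sinv2)
  have perm_as: "permutation (\<alpha> \<circ> \<sigma>)"
    using permutes_compose[OF sH aH] fin permutation_permutes by blast
  have perm_s: "permutation \<sigma>" using sH fin permutation_permutes by blast
  define F where "F = face \<alpha> \<sigma>"
  have face_eq: "\<And>x y. y \<in> F x \<Longrightarrow> F y = F x"
    unfolding F_def face_def using perm_orbit_eq[OF perm_as] by blast
  have face_self: "\<And>x. x \<in> F x"
    unfolding F_def face_def using permutation_self_in_orbit[OF perm_as] by blast
  define P where "P g = l (F g) + l (F (inv \<sigma> g))" for g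
  have inF: "\<And>x. \<alpha> (\<sigma> x) \<in> F x"
    unfolding F_def face_def using orbit.base[of "\<alpha> \<circ> \<sigma>"] by simp
  have P_alpha: "\<And>g. P (\<alpha> g) = P g"
  proof -
    fix g
    have 1: "F (\<alpha> g) = F (inv \<sigma> g)" using face_eq[OF inF[of "inv \<sigma> g"]] by (simp add: sinv1)
    have aa: "\<alpha> (\<alpha> g) = g"
    proof (cases "g \<in> H")
      case True thus ?thesis using hp by blast
    next
      case False thus ?thesis using permutes_not_in[OF aH] by metis
    qed
    have 2: "F g = F (inv \<sigma> (\<alpha> g))" using face_eq[OF inF[of "inv \<sigma> (\<alpha> g)"]] by (simp add: sinv1 aa)
    show "P (\<alpha> g) = P g" by (simp add: P_def 1 2[symmetric] add.commute)
  qed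
  have vert4: "\<And>g. g\<in>H \<Longrightarrow> orbit \<sigma> g = {g, \<sigma> g, \<sigma> (\<sigma> g), \<sigma> (\<sigma> (\<sigma> g))}"
    by (rule orbit4) (simp add: hp)
  have P_opp: "\<And>g. g\<in>H \<Longrightarrow> m dvd P g + P (\<sigma> (\<sigma> g))"
  proof -
    fix g assume g: "g\<in>H"
    define v where "v = orbit \<sigma> g"
    have vV: "v \<in> vertices H \<sigma>" unfolding vertices_def v_def using g by blast
    have v4: "v = {g, \<sigma> g, \<sigma>(\<sigma> g), \<sigma>(\<sigma>(\<sigma> g))}" unfolding v_def using g by (rule vert4)
    have vH: "v \<subseteq> H" using permutes_orbit_subset[OF sH g] v_def by simp
    have irr: "irreducible_vertex \<alpha> \<sigma> v" using assms(2) vV by (simp add: reduced_def)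
    hence "card (F ` v) = 4" by (simp add: irreducible_vertex_def F_def)
    hence "card {F g, F (\<sigma> g), F (\<sigma>(\<sigma> g)), F (\<sigma>(\<sigma>(\<sigma> g)))} = 4" by (simp add: v4)
    note dist = card4_distinct[OF this]
    have VR: "vertex_regions H \<alpha> \<sigma> v = F ` v"
    proof
      show "F ` v \<subseteq> vertex_regions H \<alpha> \<sigma> v"
      proof
        fix r assume "r \<in> F ` v"
        then obtain x where x: "x \<in> v" "r = F x" by blast
        have "r \<in> regions H \<alpha> \<sigma>" using x vH unfolding regions_def F_def by blast
        moreover have "x \<in> v \<inter> r" using x face_self by blast
        ultimately show "r \<in> vertex_regions H \<alpha> \<sigma> v"
          unfolding vertex_regions_def vr_incident_def by blast
      qed
    next
      show "vertex_regions H \<alpha> \<sigma> v \<subseteq> F ` v"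
      proof
        fix r assume r: "r \<in> vertex_regions H \<alpha> \<sigma> v"
        then obtain h' where h': "r = F h'" unfolding vertex_regions_def regions_def F_def by blast
        from r obtain x where "x \<in> v" "x \<in> r" unfolding vertex_regions_def vr_incident_def by blast
        then show "r \<in> F ` v" using face_eq h' by blast
      qed
    qed
    have gv: "(k \<noteq> \<infinity> \<and> irreducible_vertex \<alpha> \<sigma> v \<longrightarrow>
           (\<forall>r\<in>vertex_regions H \<alpha> \<sigma> v. \<forall>r'\<in>vertex_regions H \<alpha> \<sigma> v.
              [a v r = a v r'] (mod zk k))) \<and>
        (\<forall>r\<in>vertex_regions H \<alpha> \<sigma> v.
           irreducible_vertex \<alpha> \<sigma> v \<or> corner_count \<alpha> \<sigma> v r = 1 \<longrightarrow>
             (if k = \<infinity> then [a v r = 1] (mod zk k) else non_zero_divisor (zk k) (a v r)))"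
      using assms(4) vV unfolding game_version_def by (rule bspec)
    have gv1: "\<And>r. r \<in> vertex_regions H \<alpha> \<sigma> v \<Longrightarrow> (if k = \<infinity> then [a v r = 1] (mod zk k) else non_zero_divisor (zk k) (a v r))"
      using gv irr by blast
    have gv2: "k \<noteq> \<infinity> \<Longrightarrow> \<forall>r\<in>vertex_regions H \<alpha> \<sigma> v. \<forall>r'\<in>vertex_regions H \<alpha> \<sigma> v.
              [a v r = a v r'] (mod zk k)"
      by (rule mp[OF conjunct1[OF gv]]) (simp add: irr)
    obtain c where c: "\<forall>r\<in>F ` v. m dvd a v r - c" and nz: "\<forall>b. m dvd c * b \<longrightarrow> m dvd b"
    proof (cases "k = \<infinity>")
      case True
            have "\<forall>r\<in>F ` v. m dvd a v r - 1"
      proof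
        fix r assume "r \<in> F ` v"
        hence "r \<in> vertex_regions H \<alpha> \<sigma> v" using VR by simp
        hence "[a v r = 1] (mod zk k)" using gv1[of r] True by (simp only: if_True)
        thus "m dvd a v r - 1" unfolding m_def by (simp only: cong_iff_dvd_diff)
      qed
      moreover have "\<forall>b. m dvd 1 * b \<longrightarrow> m dvd b" by simp
      ultimately show ?thesis by (rule that)
    next
      case False
      have gvv: "g \<in> v" unfolding v4 by (rule insertI1)
      have r0: "F g \<in> vertex_regions H \<alpha> \<sigma> v" unfolding VR using gvv by (rule imageI)
      have "\<forall>r\<in>F ` v. m dvd a v r - a v (F g)"
      proof
        fix r assume "r \<in> F ` v"
        hence rr: "r \<in> vertex_regions H \<alpha> \<sigma> v" using VR by simp
        have "\<forall>r'\<in>vertex_regions H \<alpha> \<sigma> v. [a v r = a v r'] (mod zk k)" using gv2[OF False] rr by (rule bspec)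
        hence "[a v r = a v (F g)] (mod zk k)" using r0 by (rule bspec)
        thus "m dvd a v r - a v (F g)" unfolding m_def by (simp only: cong_iff_dvd_diff)
      qed
      moreover have "non_zero_divisor m (a v (F g))"
        using gv1[OF r0] False unfolding m_def by (simp only: if_False)
      hence "\<forall>b. m dvd a v (F g) * b \<longrightarrow> m dvd b" unfolding non_zero_divisor_def cong_0_iff .
      ultimately show ?thesis by (rule that)
    qed
    define S where "S = (\<Sum>r\<in>F ` v. l r)"
    have "m dvd game_apply H \<alpha> \<sigma> a l v"
      using assms(5) vV by (simp add: null_pattern_def m_def cong_0_iff)
    hence ga: "m dvd (\<Sum>r\<in>F ` v. a v r * l r)" by (simp add: game_apply_def VR)
    have eq: "(\<Sum>r\<in>F ` v. a v r * l r) - c * S = (\<Sum>r\<in>F ` v. (a v r - c) * l r)"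
      by (simp add: S_def sum_distrib_left sum_subtractf left_diff_distrib)
    have dY: "m dvd (\<Sum>r\<in>F ` v. (a v r - c) * l r)"
    proof (rule dvd_sum)
      fix r assume "r \<in> F ` v"
      thus "m dvd (a v r - c) * l r" using c dvd_mult2 by blast
    qed
    have "c * S = (\<Sum>r\<in>F ` v. a v r * l r) - (\<Sum>r\<in>F ` v. (a v r - c) * l r)"
      using eq by simp
    hence "m dvd c * S" using ga dY by (simp add: dvd_diff)
    hence mS: "m dvd S" using nz by blast
    have S4: "S = l (F g) + l (F (\<sigma> g)) + l (F (\<sigma> (\<sigma> g))) + l (F (\<sigma> (\<sigma> (\<sigma> g))))"
      unfolding S_def v4 using dist by simp
    have i1: "inv \<sigma> g = \<sigma> (\<sigma> (\<sigma> g))" by (rule sinv[OF g])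
    have i2: "inv \<sigma> (\<sigma> (\<sigma> g)) = \<sigma> g" by (rule sinv2)
    have "S = P g + P (\<sigma> (\<sigma> g))" unfolding S4 P_def i1 i2 by simp
    with mS show "m dvd P g + P (\<sigma> (\<sigma> g))" by simp
  qed
  define \<tau> where "\<tau> = \<sigma> \<circ> \<sigma> \<circ> \<alpha>"
  have tH: "\<tau> permutes H" unfolding \<tau>_def by (intro permutes_compose sH aH)
  have perm_t: "permutation \<tau>" using tH fin permutation_permutes by blast
  have tIn: "\<And>g. g\<in>H \<Longrightarrow> \<tau> g \<in> H" using tH by (simp add: permutes_in_image)
  have tpIn: "\<And>g n. g\<in>H \<Longrightarrow> (\<tau> ^^ n) g \<in> H"
  proof -
    fix g n assume "g \<in> H" thus "(\<tau> ^^ n) g \<in> H" by (induct n) (simp_all add: tIn)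
  qed
  have P_tau: "\<And>g. g\<in>H \<Longrightarrow> m dvd P (\<tau> g) + P g"
  proof -
    fix g assume g: "g \<in> H"
    have "m dvd P (\<alpha> g) + P (\<sigma> (\<sigma> (\<alpha> g)))" using P_opp aIn[OF g] by blast
    thus "m dvd P (\<tau> g) + P g" by (simp add: \<tau>_def P_alpha add.commute)
  qed
  have P_pow: "\<And>g n. g\<in>H \<Longrightarrow> m dvd P ((\<tau> ^^ n) g) - (-1) ^ n * P g"
  proof -
    fix g n assume g: "g \<in> H"
    show "m dvd P ((\<tau> ^^ n) g) - (-1) ^ n * P g"
    proof (induct n)
      case 0 thus ?case by simp
    next
      case (Suc n)
      have "m dvd P (\<tau> ((\<tau> ^^ n) g)) + P ((\<tau> ^^ n) g)" using P_tau tpIn[OF g] by blast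
      hence "m dvd (P (\<tau> ((\<tau> ^^ n) g)) + P ((\<tau> ^^ n) g)) - (P ((\<tau> ^^ n) g) - (-1) ^ n * P g)"
        using Suc by (rule dvd_diff)
      thus ?case by (simp add: algebra_simps)
    qed
  qed
  have pm: "\<And>g n. g\<in>H \<Longrightarrow> m dvd P ((\<tau> ^^ n) g) - P g \<or> m dvd P ((\<tau> ^^ n) g) + P g"
  proof -
    fix g n assume g: "g \<in> H"
    show "m dvd P ((\<tau> ^^ n) g) - P g \<or> m dvd P ((\<tau> ^^ n) g) + P g"
    proof (cases "even n")
      case True thus ?thesis using P_pow[OF g, of n] by simp
    next
      case False thus ?thesis using P_pow[OF g, of n] by simp
    qed
  qed
  have notin: "\<And>h. h\<in>H \<Longrightarrow> \<alpha> h \<notin> orbit \<tau> h"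
  proof
    fix h assume h: "h \<in> H" and o: "\<alpha> h \<in> orbit \<tau> h"
    then obtain n where n: "\<alpha> h = (\<tau> ^^ n) h" using orbit_altdef_permutation[OF perm_t] by blast
    have refl: "\<And>j. j \<le> n \<Longrightarrow> \<alpha> ((\<tau> ^^ j) h) = (\<tau> ^^ (n - j)) h"
    proof -
      fix j show "j \<le> n \<Longrightarrow> \<alpha> ((\<tau> ^^ j) h) = (\<tau> ^^ (n - j)) h"
      proof (induct j)
        case 0 thus ?case using n by simp
      next
        case (Suc j)
        then obtain q where q: "n - j = Suc q" "n - Suc j = q" by (metis Suc_diff_Suc Suc_le_lessD)
        have xH: "(\<tau> ^^ q) h \<in> H" using tpIn[OF h] .
        have "\<alpha> ((\<tau> ^^ Suc j) h) = \<alpha> (\<sigma> (\<sigma> (\<alpha> ((\<tau> ^^ j) h))))" by (simp add: \<tau>_def)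
        also have "\<dots> = \<alpha> (\<sigma> (\<sigma> ((\<tau> ^^ (n - j)) h)))" using Suc by simp
        also have "\<dots> = \<alpha> (\<sigma> (\<sigma> (\<sigma> (\<sigma> (\<alpha> ((\<tau> ^^ q) h))))))" by (simp add: q(1) \<tau>_def)
        also have "\<dots> = (\<tau> ^^ q) h" using s4[OF aIn[OF xH]] hp[OF xH] by simp
        finally show ?case using q(2) by simp
      qed
    qed
    show False
    proof (cases "even n")
      case True
      then obtain j where j: "n = 2 * j" by blast
      have "\<alpha> ((\<tau> ^^ j) h) = (\<tau> ^^ j) h" using refl[of j] j by simp
      thus False using hp[OF tpIn[OF h]] by blast
    next
      case False
      then obtain j where j: "n = 2 * j + 1" using oddE by blast
      have yH: "\<alpha> ((\<tau> ^^ j) h) \<in> H" using aIn[OF tpIn[OF h]] .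
      have "\<alpha> ((\<tau> ^^ j) h) = (\<tau> ^^ Suc j) h" using refl[of j] j by simp
      also have "\<dots> = \<sigma> (\<sigma> (\<alpha> ((\<tau> ^^ j) h)))" by (simp add: \<tau>_def)
      finally show False using hp[OF yH] by metis
    qed
  qed
  obtain h0 where h0: "h0 \<in> H" using kd by auto
  define O1 where "O1 = orbit \<tau> h0"
  define O2 where "O2 = orbit \<tau> (\<alpha> h0)"
  have O12: "O1 \<noteq> O2"
  proof
    assume "O1 = O2"
    hence "\<alpha> h0 \<in> orbit \<tau> h0" unfolding O1_def O2_def using permutation_self_in_orbit[OF perm_t] by metis
    thus False using notin[OF h0] by blast
  qed
  have tau_eq: "\<tau> = \<sigma> \<circ> \<sigma> \<circ> \<alpha>" by (rule \<tau>_def)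
  have strands: "strands H \<alpha> \<sigma> = {O1, O2}"
  proof (rule card2_eq)
    show "finite (strands H \<alpha> \<sigma>)" unfolding strands_def using fin by simp
    show "card (strands H \<alpha> \<sigma>) = 2" using kd by blast
    show "O1 \<in> strands H \<alpha> \<sigma>" unfolding strands_def O1_def tau_eq using h0 by blast
    show "O2 \<in> strands H \<alpha> \<sigma>" unfolding strands_def O2_def tau_eq using aIn[OF h0] by blast
    show "O1 \<noteq> O2" by (rule O12)
  qed
  have allpm: "\<And>g. g \<in> H \<Longrightarrow> m dvd P g - P h0 \<or> m dvd P g + P h0"
  proof -
    fix g assume g: "g \<in> H"
    have "orbit \<tau> g \<in> strands H \<alpha> \<sigma>" unfolding strands_def tau_eq using g by blast
    hence "orbit \<tau> g = O1 \<or> orbit \<tau> g = O2" using strands by blast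
    moreover have "g \<in> orbit \<tau> g" using permutation_self_in_orbit[OF perm_t] .
    ultimately have "g \<in> O1 \<or> g \<in> O2" by blast
    thus "m dvd P g - P h0 \<or> m dvd P g + P h0"
    proof
      assume "g \<in> O1"
      then obtain n where "g = (\<tau> ^^ n) h0" unfolding O1_def using orbit_altdef_permutation[OF perm_t] by blast
      thus ?thesis using pm[OF h0, of n] by simp
    next
      assume "g \<in> O2"
      then obtain n where "g = (\<tau> ^^ n) (\<alpha> h0)" unfolding O2_def using orbit_altdef_permutation[OF perm_t] by blast
      thus ?thesis using pm[OF aIn[OF h0], of n] by (simp add: P_alpha)
    qed
  qed
  have push: "\<And>e h. e = {h, \<alpha> h} \<Longrightarrow> push_number \<alpha> \<sigma> l e = P h"
  proof -
    fix e h assume e: "e = {h, \<alpha> h}"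
    define g where "g = (SOME g. g \<in> e)"
    have "g \<in> e" unfolding g_def e by (rule someI[of _ h]) simp
    hence "P g = P h" using e P_alpha by auto
    thus "push_number \<alpha> \<sigma> l e = P h" unfolding push_number_def Let_def g_def[symmetric]
      by (simp add: P_def F_def)
  qed
  have cg: "\<And>x y. [x = y] (mod zk k) \<longleftrightarrow> m dvd x - y" by (simp add: m_def cong_iff_dvd_diff)
  have ERa: "\<And>x e. x \<in> e \<Longrightarrow> F x \<in> edge_regions \<alpha> \<sigma> e"
    unfolding edge_regions_def F_def by blast
  have ERb: "\<And>x e. x \<in> e \<Longrightarrow> F (inv \<sigma> x) \<in> edge_regions \<alpha> \<sigma> e"
    unfolding edge_regions_def F_def by blast
  have edgeP: "\<And>e x. e \<in> edges H \<alpha> \<Longrightarrow> x \<in> e \<Longrightarrow> push_number \<alpha> \<sigma> l e = P x \<and> x \<in> H"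
  proof -
    fix e x assume e: "e \<in> edges H \<alpha>" and x: "x \<in> e"
    then obtain h where h: "h \<in> H" "e = {h, \<alpha> h}" unfolding edges_def by blast
    have "push_number \<alpha> \<sigma> l e = P h" using push h(2) by blast
    moreover have "P x = P h" "x \<in> H" using x h aIn P_alpha by auto
    ultimately show "push_number \<alpha> \<sigma> l e = P x \<and> x \<in> H" by simp
  qed
  show ?thesis
  proof (intro exI[of _ "P h0"] conjI ballI impI)
    fix e assume e: "e \<in> edges H \<alpha>"
    then obtain h where h: "h \<in> H" "e = {h, \<alpha> h}" unfolding edges_def by blast
    have "push_number \<alpha> \<sigma> l e = P h" using edgeP[OF e, of h] h by simp
    thus "[push_number \<alpha> \<sigma> l e = P h0] (mod zk k) \<or> [push_number \<alpha> \<sigma> l e = - P h0] (mod zk k)"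
      using allpm[OF h(1)] by (simp add: cg)
  next
    fix e1 e2 assume e1: "e1 \<in> edges H \<alpha>" and e2: "e2 \<in> edges H \<alpha>"
      and hyp: "(\<exists>v\<in>vertices H \<sigma>. v \<inter> e1 \<noteq> {} \<and> v \<inter> e2 \<noteq> {}) \<and>
       edge_regions \<alpha> \<sigma> e1 \<inter> edge_regions \<alpha> \<sigma> e2 = {}"
    then obtain v x1 x2 where v: "v \<in> vertices H \<sigma>" and x1: "x1 \<in> v" "x1 \<in> e1"
      and x2: "x2 \<in> v" "x2 \<in> e2" by blast
    have disj: "edge_regions \<alpha> \<sigma> e1 \<inter> edge_regions \<alpha> \<sigma> e2 = {}" using hyp by blast
    obtain g where g: "g \<in> H" "v = orbit \<sigma> g" using v unfolding vertices_def by blast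
    have p1: "push_number \<alpha> \<sigma> l e1 = P x1" and x1H: "x1 \<in> H" using edgeP[OF e1 x1(2)] by auto
    have p2: "push_number \<alpha> \<sigma> l e2 = P x2" using edgeP[OF e2 x2(2)] by auto
    have "orbit \<sigma> x1 = v" using perm_orbit_eq[OF perm_s] x1(1) g(2) by blast
    hence "x2 \<in> {x1, \<sigma> x1, \<sigma> (\<sigma> x1), \<sigma> (\<sigma> (\<sigma> x1))}" using x2(1) vert4[OF x1H] by simp
    hence cases4: "x2 = x1 \<or> x2 = \<sigma> x1 \<or> x2 = \<sigma> (\<sigma> x1) \<or> x2 = \<sigma> (\<sigma> (\<sigma> x1))" by simp
    have n1: "x2 \<noteq> x1"
    proof
      assume "x2 = x1"
      hence "F x1 \<in> edge_regions \<alpha> \<sigma> e1 \<inter> edge_regions \<alpha> \<sigma> e2" using ERa[OF x1(2)] ERa[OF x2(2)] by simp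
      thus False using disj by simp
    qed
    have n2: "x2 \<noteq> \<sigma> x1"
    proof
      assume "x2 = \<sigma> x1"
      hence "inv \<sigma> x2 = x1" by (simp add: sinv2)
      hence "F x1 \<in> edge_regions \<alpha> \<sigma> e1 \<inter> edge_regions \<alpha> \<sigma> e2" using ERa[OF x1(2)] ERb[OF x2(2)] by simp
      thus False using disj by simp
    qed
    have n3: "x2 \<noteq> \<sigma> (\<sigma> (\<sigma> x1))"
    proof
      assume "x2 = \<sigma> (\<sigma> (\<sigma> x1))"
      hence "\<sigma> x2 = x1" using s4[OF x1H] by simp
      hence "inv \<sigma> x1 = x2" using sinv2[of x2] by simp
      hence "F x2 \<in> edge_regions \<alpha> \<sigma> e1 \<inter> edge_regions \<alpha> \<sigma> e2" using ERb[OF x1(2)] ERa[OF x2(2)] by simp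
      thus False using disj by simp
    qed
    have x2eq: "x2 = \<sigma> (\<sigma> x1)" using cases4 n1 n2 n3 by blast
    have "m dvd P x1 + P (\<sigma> (\<sigma> x1))" by (rule P_opp[OF x1H])
    hence "m dvd push_number \<alpha> \<sigma> l e1 + push_number \<alpha> \<sigma> l e2" unfolding p1 p2 x2eq .
    then obtain t where t: "push_number \<alpha> \<sigma> l e1 + push_number \<alpha> \<sigma> l e2 = m * t" by blast
    have eqA: "push_number \<alpha> \<sigma> l e2 - - P h0 = m * t - (push_number \<alpha> \<sigma> l e1 - P h0)" using t by simp
    have eqB: "push_number \<alpha> \<sigma> l e1 - P h0 = m * t - (push_number \<alpha> \<sigma> l e2 - - P h0)" using t by simp
    show "[push_number \<alpha> \<sigma> l e1 = P h0] (mod zk k) \<longleftrightarrow> [push_number \<alpha> \<sigma> l e2 = - P h0] (mod zk k)"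
      unfolding cg
    proof
      assume "m dvd push_number \<alpha> \<sigma> l e1 - P h0"
      thus "m dvd push_number \<alpha> \<sigma> l e2 - - P h0" unfolding eqA by (rule dvd_diff[OF dvd_triv_left])
    next
      assume "m dvd push_number \<alpha> \<sigma> l e2 - - P h0"
      thus "m dvd push_number \<alpha> \<sigma> l e1 - P h0" unfolding eqB by (rule dvd_diff[OF dvd_triv_left])
    qed
  qed
qed
end
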